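(* Let $(L,\le,\bot,\top)$ be a complete lattice and $(\&_i,\swarrow^i,\nwarrow_i)$, $i=1,\dots,n$, adjoint triples on $L$ with $x\,\&_i\,\top=\top\,\&_i\,x=x$ for all $x\in L$ and all $i$. Let $(A,B,R,\sigma)$ be a normalized context whose concept lattice $\mathcal{M}$ satisfies the ascending chain condition, and suppose $\{(A_\lambda,B_\lambda,R_\lambda,\sigma_\lambda)\mid\lambda\in\Lambda\}$ is a decomposition into independent subcontexts. Let $\langle g,f\rangle\in\mathcal{M}$ with $g\ne g_\top$ and $g\neq g_\bot$. Then there exists $\lambda\in\Lambda$ such that $$\langle g,f\rangle=\bigwedge M_g^{A_\lambda}\quad\text{and}\quad M_g^{A\setminus A_\lambda}=\varnothing.$$
   Context: An adjoint triple on $L$ is a triple of maps $\&,\swarrow,\nwarrow\colon L\times L\to L$ with $x\le z\swarrow y\iff x\& y\le z\iff y\le z\nwarrow x$. A context is $(A,B,R,\sigma)$ with $A,B$ non-empty sets, $R\colon A\times B\to L$, $\sigma\colon A\times B\to\{1,\dots,n\}$; it is normalized if every $a\in A$ has $b_1,b_2$ with $R(a,b_1)\ne\bot$, $R(a,b_2)=\bot$, and every $b\in B$ has $a_1,a_2$ with $R(a_1,b)\neq\bot$, $R(a_2,b)=\bot$. For $g\colon B\to L$, $f\colon A\to L$: $g^\uparrow(a)=\inf_{b}R(a,b)\swarrow^{\sigma(a,b)}g(b)$, $f^\downarrow(b)=\inf_{a}R(a,b)\nwarrow_{\sigma(a,b)}f(a)$. $\mathcal{M}$ is the set of pairs $\langle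 g,f\rangle$ with $g^\uparrow=f$, $f^\downarrow=g$, ordered by $g_1\le g_2$ pointwise; it is a complete lattice. $g_\top,g_\bot$ are the constant maps $B\to L$ with values $\top,\bot$. The fuzzy-attribute $\phi_{a,x}\colon A\to L$ takes value $x$ at $a$ and $\bot$ elsewhere. A meet-irreducible element of $\mathcal{M}$ is an element $c\neq$ top with $c=d\wedge e\Rightarrow c=d$ or $c=e$; every meet-irreducible concept has the form $\langle\phi_{a,x}^\downarrow,\phi_{a,x}^{\downarrow\uparrow}\rangle$ for some $a\in A,x\in L$. For $A'\subseteq A$, $M_F^{A'}$ is the set of meet-irreducible concepts of $\mathcal{M}$ of the form $\langle\phi_{a,x}^\downarrow,\phi_{a,x}^{\downarrow\uparrow}\rangle$ with $a\in A'$, and $M_g^{A'}=\{c\in M_F^{A'}\mid\langle g,f\rangle\preceq c\}$. A separable subcontext is a tuple $(Y,X,R_{Y\times X},\sigma_{Y\times X})$ with $Y\subsetneq A$, $X\subsetneq B$ non-empty, some $a\in Y,b\in X$ with $R(a,b)\ne\bot$, $R(a,b')=\bot$ on $Y\times(B\setminus X)$ and $R(a',b)=\bot$ on $(A\setminus Y)\times X$. An operator $\&$ has zero-divisors if $x\&y=\bot$ for some $x,y\ne\bot$. A decomposition into independent subcontexts $\{(A_\lambda,B_\lambda,R_\lambda,\sigma_\lambda)\}_{\lambda\in\Lambda}$ ($\Lambda\neq\varnothing$, restrictions to $A_\lambda\times B_\lambda$) requires: each tuple separable; the $A_\lambda$ partition $A$ and the $B_\lambda$ partition $B$ (pairwise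 disjoint, union the whole set); and for every $\lambda$, $\&_{\sigma(a,b)}$ has no zero-divisors for all $(a,b)\in((A\setminus A_\lambda)\times B_\lambda)\cup(A_\lambda\times(B\setminus B_\lambda))$. *)

theory Defs
  imports Main
begin

definition adjoint_triple :: "('l::complete_lattice \<Rightarrow> 'l \<Rightarrow> 'l) \<Rightarrow> ('l \<Rightarrow> 'l \<Rightarrow> 'l) \<Rightarrow> ('l \<Rightarrow> 'l \<Rightarrow> 'l) \<Rightarrow> bool" where
  "adjoint_triple cj sw nw \<longleftrightarrow>
     (\<forall>x y z. (x \<le> sw z y \<longleftrightarrow> cj x y \<le> z) \<and> (cj x y \<le> z \<longleftrightarrow> y \<le> nw z x))"

definition is_context :: "nat \<Rightarrow> 'a set \<Rightarrow> 'b set \<Rightarrow> ('a \<Rightarrow> 'b \<Rightarrow> 'l) \<Rightarrow> ('a \<Rightarrow> 'b \<Rightarrow> nat) \<Rightarrow> bool" where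
  "is_context n A B R \<sigma> \<longleftrightarrow> A \<noteq> {} \<and> B \<noteq> {} \<and> (\<forall>a\<in>A. \<forall>b\<in>B. \<sigma> a b \<in> {1..n})"

definition normalized :: "'a set \<Rightarrow> 'b set \<Rightarrow> ('a \<Rightarrow> 'b \<Rightarrow> 'l::complete_lattice) \<Rightarrow> bool" where
  "normalized A B R \<longleftrightarrow>
     (\<forall>a\<in>A. (\<exists>b1\<in>B. R a b1 \<noteq> bot) \<and> (\<exists>b2\<in>B. R a b2 = bot)) \<and>
     (\<forall>b\<in>B. (\<exists>a1\<in>A. R a1 b \<noteq> bot) \<and> (\<exists>a2\<in>A. R a2 b = bot))"

text \<open>Derivation operators. Maps B \<rightarrow> L / A \<rightarrow> L are represented by total functions
  taking the value bot outside B / A.\<close>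
definition up_op :: "'a set \<Rightarrow> 'b set \<Rightarrow> ('a \<Rightarrow> 'b \<Rightarrow> 'l::complete_lattice) \<Rightarrow> ('a \<Rightarrow> 'b \<Rightarrow> nat)
    \<Rightarrow> (nat \<Rightarrow> 'l \<Rightarrow> 'l \<Rightarrow> 'l) \<Rightarrow> ('b \<Rightarrow> 'l) \<Rightarrow> ('a \<Rightarrow> 'l)" where
  "up_op A B R \<sigma> sw g = (\<lambda>a. if a \<in> A then (INF b\<in>B. sw (\<sigma> a b) (R a b) (g b)) else bot)"

definition down_op :: "'a set \<Rightarrow> 'b set \<Rightarrow> ('a \<Rightarrow> 'b \<Rightarrow> 'l::complete_lattice) \<Rightarrow> ('a \<Rightarrow> 'b \<Rightarrow> nat)
    \<Rightarrow> (nat \<Rightarrow> 'l \<Rightarrow> 'l \<Rightarrow> 'l) \<Rightarrow> ('a \<Rightarrow> 'l) \<Rightarrow> ('b \<Rightarrow> 'l)" where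
  "down_op A B R \<sigma> nw f = (\<lambda>b. if b \<in> B then (INF a\<in>A. nw (\<sigma> a b) (R a b) (f a)) else bot)"

definition concepts :: "'a set \<Rightarrow> 'b set \<Rightarrow> ('a \<Rightarrow> 'b \<Rightarrow> 'l::complete_lattice) \<Rightarrow> ('a \<Rightarrow> 'b \<Rightarrow> nat)
    \<Rightarrow> (nat \<Rightarrow> 'l \<Rightarrow> 'l \<Rightarrow> 'l) \<Rightarrow> (nat \<Rightarrow> 'l \<Rightarrow> 'l \<Rightarrow> 'l) \<Rightarrow> (('b \<Rightarrow> 'l) \<times> ('a \<Rightarrow> 'l)) set" where
  "concepts A B R \<sigma> sw nw =
     {(g, f). up_op A B R \<sigma> sw g = f \<and> down_op A B R \<sigma> nw f = g}"

definition concept_le :: "'b set \<Rightarrow> ('b \<Rightarrow> 'l::complete_lattice) \<times> ('a \<Rightarrow> 'l) \<Rightarrow> ('b \<Rightarrow> 'l) \<times> ('a \<Rightarrow> 'l) \<Rightarrow> bool" where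
  "concept_le B c d \<longleftrightarrow> (\<forall>b\<in>B. fst c b \<le> fst d b)"

definition is_meet_in :: "'b set \<Rightarrow> (('b \<Rightarrow> 'l::complete_lattice) \<times> ('a \<Rightarrow> 'l)) set
    \<Rightarrow> (('b \<Rightarrow> 'l) \<times> ('a \<Rightarrow> 'l)) set \<Rightarrow> ('b \<Rightarrow> 'l) \<times> ('a \<Rightarrow> 'l) \<Rightarrow> bool" where
  "is_meet_in B M S c \<longleftrightarrow> c \<in> M \<and> (\<forall>d\<in>S. concept_le B c d) \<and>
     (\<forall>c'\<in>M. (\<forall>d\<in>S. concept_le B c' d) \<longrightarrow> concept_le B c' c)"

definition meet_irreducible_in :: "'b set \<Rightarrow> (('b \<Rightarrow> 'l::complete_lattice) \<times> ('a \<Rightarrow> 'l)) set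
    \<Rightarrow> ('b \<Rightarrow> 'l) \<times> ('a \<Rightarrow> 'l) \<Rightarrow> bool" where
  "meet_irreducible_in B M c \<longleftrightarrow> c \<in> M \<and> \<not> is_meet_in B M {} c \<and>
     (\<forall>d\<in>M. \<forall>e\<in>M. is_meet_in B M {d, e} c \<longrightarrow> c = d \<or> c = e)"

definition acc_in :: "'b set \<Rightarrow> (('b \<Rightarrow> 'l::complete_lattice) \<times> ('a \<Rightarrow> 'l)) set \<Rightarrow> bool" where
  "acc_in B M \<longleftrightarrow> \<not> (\<exists>s::nat \<Rightarrow> ('b \<Rightarrow> 'l) \<times> ('a \<Rightarrow> 'l).
      \<forall>k. s k \<in> M \<and> concept_le B (s k) (s (Suc k)) \<and> s k \<noteq> s (Suc k))"

definition phi :: "'a \<Rightarrow> 'l::complete_lattice \<Rightarrow> 'a \<Rightarrow> 'l" where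
  "phi a x = (\<lambda>a'. if a' = a then x else bot)"

definition MF :: "'a set \<Rightarrow> 'b set \<Rightarrow> ('a \<Rightarrow> 'b \<Rightarrow> 'l::complete_lattice) \<Rightarrow> ('a \<Rightarrow> 'b \<Rightarrow> nat)
    \<Rightarrow> (nat \<Rightarrow> 'l \<Rightarrow> 'l \<Rightarrow> 'l) \<Rightarrow> (nat \<Rightarrow> 'l \<Rightarrow> 'l \<Rightarrow> 'l) \<Rightarrow> 'a set
    \<Rightarrow> (('b \<Rightarrow> 'l) \<times> ('a \<Rightarrow> 'l)) set" where
  "MF A B R \<sigma> sw nw A' =
     {c. meet_irreducible_in B (concepts A B R \<sigma> sw nw) c \<and>
         (\<exists>a\<in>A'. \<exists>x. c = (down_op A B R \<sigma> nw (phi a x),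
                            up_op A B R \<sigma> sw (down_op A B R \<sigma> nw (phi a x))))}"

definition Mg :: "'a set \<Rightarrow> 'b set \<Rightarrow> ('a \<Rightarrow> 'b \<Rightarrow> 'l::complete_lattice) \<Rightarrow> ('a \<Rightarrow> 'b \<Rightarrow> nat)
    \<Rightarrow> (nat \<Rightarrow> 'l \<Rightarrow> 'l \<Rightarrow> 'l) \<Rightarrow> (nat \<Rightarrow> 'l \<Rightarrow> 'l \<Rightarrow> 'l) \<Rightarrow> 'a set
    \<Rightarrow> ('b \<Rightarrow> 'l) \<times> ('a \<Rightarrow> 'l) \<Rightarrow> (('b \<Rightarrow> 'l) \<times> ('a \<Rightarrow> 'l)) set" where
  "Mg A B R \<sigma> sw nw A' c = {d \<in> MF A B R \<sigma> sw nw A'. concept_le B c d}"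

definition separable :: "'a set \<Rightarrow> 'b set \<Rightarrow> ('a \<Rightarrow> 'b \<Rightarrow> 'l::complete_lattice) \<Rightarrow> 'a set \<Rightarrow> 'b set \<Rightarrow> bool" where
  "separable A B R Y X \<longleftrightarrow> Y \<subset> A \<and> X \<subset> B \<and> Y \<noteq> {} \<and> X \<noteq> {} \<and>
     (\<exists>a\<in>Y. \<exists>b\<in>X. R a b \<noteq> bot) \<and>
     (\<forall>a\<in>Y. \<forall>b\<in>B - X. R a b = bot) \<and>
     (\<forall>a\<in>A - Y. \<forall>b\<in>X. R a b = bot)"

definition no_zero_divisors :: "('l::complete_lattice \<Rightarrow> 'l \<Rightarrow> 'l) \<Rightarrow> bool" where
  "no_zero_divisors cj \<longleftrightarrow> (\<forall>x y. x \<noteq> bot \<longrightarrow> y \<noteq> bot \<longrightarrow> cj x y \<noteq> bot)"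

definition independent_decomposition :: "'a set \<Rightarrow> 'b set \<Rightarrow> ('a \<Rightarrow> 'b \<Rightarrow> 'l::complete_lattice)
    \<Rightarrow> ('a \<Rightarrow> 'b \<Rightarrow> nat) \<Rightarrow> (nat \<Rightarrow> 'l \<Rightarrow> 'l \<Rightarrow> 'l) \<Rightarrow> 'i set \<Rightarrow> ('i \<Rightarrow> 'a set) \<Rightarrow> ('i \<Rightarrow> 'b set) \<Rightarrow> bool" where
  "independent_decomposition A B R \<sigma> cj \<Lambda> As Bs \<longleftrightarrow>
     \<Lambda> \<noteq> {} \<and>
     (\<forall>l\<in>\<Lambda>. separable A B R (As l) (Bs l)) \<and>
     (\<forall>l\<in>\<Lambda>. \<forall>\<mu>\<in>\<Lambda>. l \<noteq> \<mu> \<longrightarrow> As l \<inter> As \<mu> = {} \<and> Bs l \<inter> Bs \<mu> = {}) \<and>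
     (\<Union>l\<in>\<Lambda>. As l) = A \<and> (\<Union>l\<in>\<Lambda>. Bs l) = B \<and>
     (\<forall>l\<in>\<Lambda>. \<forall>(a, b) \<in> ((A - As l) \<times> Bs l) \<union> (As l \<times> (B - Bs l)).
        no_zero_divisors (cj (\<sigma> a b)))"

end

theory Submission
  imports Defs
begin

lemma acc_max:
  assumes acc: "acc_in B M" and TM: "T \<subseteq> M" and ne: "T \<noteq> {}"
  shows "\<exists>d\<in>T. \<forall>y\<in>T. concept_le B d y \<longrightarrow> y = d"
proof (rule ccontr)
  assume "\<not> ?thesis"
  then have "\<forall>d\<in>T. \<exists>y. y \<in> T \<and> concept_le B d y \<and> y \<noteq> d" by blast
  then obtain nx where nx: "\<forall>d\<in>T. nx d \<in> T \<and> concept_le B d (nx d) \<and> nx d \<noteq> d"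
    by metis
  obtain t0 where t0: "t0 \<in> T" using ne by blast
  define s where "s k = (nx ^^ k) t0" for k
  have sT: "s k \<in> T" for k
    by (induction k) (use t0 nx in \<open>auto simp: s_def\<close>)
  have "\<forall>k. s k \<in> M \<and> concept_le B (s k) (s (Suc k)) \<and> s k \<noteq> s (Suc k)"
  proof
    fix k
    have "s (Suc k) = nx (s k)" by (simp add: s_def)
    then show "s k \<in> M \<and> concept_le B (s k) (s (Suc k)) \<and> s k \<noteq> s (Suc k)"
      using sT[of k] nx TM by auto
  qed
  then show False using acc unfolding acc_in_def by blast
qed

locale ctxl =
  fixes n :: nat
    and cj sw nw :: "nat \<Rightarrow> 'l::complete_lattice \<Rightarrow> 'l \<Rightarrow> 'l"
    and A :: "'a set" and B :: "'b set"
    and R :: "'a \<Rightarrow> 'b \<Rightarrow> 'l" and \<sigma> :: "'a \<Rightarrow> 'b \<Rightarrow> nat"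
  assumes adj: "\<forall>i\<in>{1..n}. adjoint_triple (cj i) (sw i) (nw i)"
    and rng: "\<forall>a\<in>A. \<forall>b\<in>B. \<sigma> a b \<in> {1..n}"
begin

abbreviation "dn \<equiv> down_op A B R \<sigma> nw"
abbreviation "upo \<equiv> up_op A B R \<sigma> sw"
abbreviation "MM \<equiv> concepts A B R \<sigma> sw nw"
abbreviation "cc a x \<equiv> (dn (phi a x), upo (dn (phi a x)))"

lemma adjD:
  assumes "a \<in> A" "b \<in> B"
  shows "(x \<le> sw (\<sigma> a b) z y \<longleftrightarrow> cj (\<sigma> a b) x y \<le> z)"
    "(cj (\<sigma> a b) x y \<le> z \<longleftrightarrow> y \<le> nw (\<sigma> a b) z x)"
  using adj rng assms unfolding adjoint_triple_def by blast+

lemma galois: "(\<forall>b\<in>B. g b \<le> dn f b) \<longleftrightarrow> (\<forall>a\<in>A. f a \<le> upo g a)"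
  unfolding down_op_def up_op_def by (auto simp: le_INF_iff adjD)

lemma up_down: "a \<in> A \<Longrightarrow> f a \<le> upo (dn f) a"
  using galois[of "dn f" f] by blast

lemma down_up: "b \<in> B \<Longrightarrow> g b \<le> dn (upo g) b"
  using galois[of g "upo g"] by blast

lemma down_anti:
  assumes "\<forall>a\<in>A. f1 a \<le> f2 a" "b \<in> B"
  shows "dn f2 b \<le> dn f1 b"
proof -
  have "\<forall>a\<in>A. f1 a \<le> upo (dn f2) a" using assms(1) up_down order_trans by blast
  then show ?thesis using galois[of "dn f2" f1] assms(2) by blast
qed

lemma up_anti:
  assumes "\<forall>b\<in>B. g1 b \<le> g2 b" "a \<in> A"
  shows "upo g2 a \<le> upo g1 a"
proof -
  have "\<forall>b\<in>B. g1 b \<le> dn (upo g2) b" using assms(1) down_up order_trans by blast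
  then show ?thesis using galois[of g1 "upo g2"] assms(2) by blast
qed

lemma dn_out: "b \<notin> B \<Longrightarrow> dn f b = bot"
  by (simp add: down_op_def)

lemma dud: "dn (upo (dn f)) = dn f"
proof
  fix b
  show "dn (upo (dn f)) b = dn f b"
  proof (cases "b \<in> B")
    case True
    have "dn (upo (dn f)) b \<le> dn f b"
      using down_anti[of f "upo (dn f)" b] up_down True by blast
    moreover have "dn f b \<le> dn (upo (dn f)) b" using down_up True by blast
    ultimately show ?thesis by (rule antisym)
  qed (simp add: dn_out)
qed

lemma cc_in: "cc a x \<in> MM"
  unfolding concepts_def using dud by simp

lemma concD: "(h, k) \<in> MM \<Longrightarrow> h = dn k \<and> k = upo h"
  unfolding concepts_def by auto

lemma below_cc:
  assumes "(h, k) \<in> MM" "a \<in> A"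
  shows "concept_le B (h, k) (cc a (k a))"
  unfolding concept_le_def
proof
  fix b assume b: "b \<in> B"
  have "\<forall>a'\<in>A. phi a (k a) a' \<le> k a'" by (simp add: phi_def)
  then have "dn k b \<le> dn (phi a (k a)) b" using down_anti b by blast
  then show "fst (h, k) b \<le> fst (cc a (k a)) b" using concD[OF assms(1), THEN conjunct1] by simp
qed

lemma inf_cc:
  assumes "(h, k) \<in> MM" "\<forall>a\<in>A. concept_le B c' (cc a (k a))"
  shows "concept_le B c' (h, k)"
  unfolding concept_le_def
proof
  fix b assume b: "b \<in> B"
  have "\<forall>a\<in>A. fst c' b \<le> nw (\<sigma> a b) (R a b) (k a)"
  proof
    fix a assume a: "a \<in> A"
    have "fst c' b \<le> dn (phi a (k a)) b" using assms(2) a b unfolding concept_le_def by auto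
    also have "\<dots> \<le> nw (\<sigma> a b) (R a b) (phi a (k a) a)"
      unfolding down_op_def using a b by (auto intro: INF_lower)
    finally show "fst c' b \<le> nw (\<sigma> a b) (R a b) (k a)" by (simp add: phi_def)
  qed
  then have "fst c' b \<le> dn k b" unfolding down_op_def using b by (auto intro: INF_greatest)
  then show "fst c' b \<le> fst (h, k) b" using concD[OF assms(1), THEN conjunct1] by simp
qed

lemma antisym_c:
  assumes "c1 \<in> MM" "c2 \<in> MM" "concept_le B c1 c2" "concept_le B c2 c1"
  shows "c1 = c2"
proof -
  obtain h1 k1 h2 k2 where e: "c1 = (h1, k1)" "c2 = (h2, k2)" by fastforce
  have h1: "h1 = dn k1" and k1: "k1 = upo h1" using concD assms(1) e by blast+
  have h2: "h2 = dn k2" and k2: "k2 = upo h2" using concD assms(2) e by blast+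
  have hh: "h1 = h2"
  proof
    fix b show "h1 b = h2 b"
    proof (cases "b \<in> B")
      case True
      have "h1 b \<le> h2 b" "h2 b \<le> h1 b" using assms(3,4) e True unfolding concept_le_def by auto
      then show ?thesis by (rule antisym)
    next
      case False
      have "h1 b = bot" using h1 dn_out[OF False] by simp
      moreover have "h2 b = bot" using h2 dn_out[OF False] by simp
      ultimately show ?thesis by simp
    qed
  qed
  have "k1 = k2" using k1 k2 hh by simp
  then show ?thesis using e hh by simp
qed

lemma nw_bot_top:
  assumes "a \<in> A" "b \<in> B"
  shows "nw (\<sigma> a b) z bot = top"
proof -
  have "cj (\<sigma> a b) bot top \<le> z" using adjD(1)[OF assms, of bot z top] by simp
  then show ?thesis using adjD(2)[OF assms] by (simp add: top_unique)
qed

lemma dn_bot_top: "b \<in> B \<Longrightarrow> dn (\<lambda>_. bot) b = top"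
  unfolding down_op_def by (simp add: nw_bot_top)

lemma nw_zero:
  assumes "a \<in> A" "b \<in> B" "no_zero_divisors (cj (\<sigma> a b))" "x \<noteq> bot"
  shows "nw (\<sigma> a b) bot x = bot"
proof -
  have "cj (\<sigma> a b) x (nw (\<sigma> a b) bot x) \<le> bot" using adjD(2)[OF assms(1,2)] by simp
  then show ?thesis using assms(3,4) unfolding no_zero_divisors_def using bot_unique by blast
qed

end

theorem proposition30:
  fixes n :: nat
    and cj sw nw :: "nat \<Rightarrow> 'l::complete_lattice \<Rightarrow> 'l \<Rightarrow> 'l"
    and A :: "'a set" and B :: "'b set"
    and R :: "'a \<Rightarrow> 'b \<Rightarrow> 'l" and \<sigma> :: "'a \<Rightarrow> 'b \<Rightarrow> nat"
    and \<Lambda> :: "'i set" and As :: "'i \<Rightarrow> 'a set" and Bs :: "'i \<Rightarrow> 'b set"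
    and g :: "'b \<Rightarrow> 'l" and f :: "'a \<Rightarrow> 'l"
  assumes adj: "\<forall>i\<in>{1..n}. adjoint_triple (cj i) (sw i) (nw i)"
    and unit: "\<forall>i\<in>{1..n}. \<forall>x. cj i x top = x \<and> cj i top x = x"
    and ctx: "is_context n A B R \<sigma>"
    and norm: "normalized A B R"
    and acc: "acc_in B (concepts A B R \<sigma> sw nw)"
    and dec: "independent_decomposition A B R \<sigma> cj \<Lambda> As Bs"
    and gf: "(g, f) \<in> concepts A B R \<sigma> sw nw"
    and g_not_top: "\<not> (\<forall>b\<in>B. g b = top)"
    and g_not_bot: "\<not> (\<forall>b\<in>B. g b = bot)"
  shows "\<exists>l\<in>\<Lambda>.
           is_meet_in B (concepts A B R \<sigma> sw nw) (Mg A B R \<sigma> sw nw (As l) (g, f)) (g, f) \<and>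
           Mg A B R \<sigma> sw nw (A - As l) (g, f) = {}"
proof -
  have rng: "\<forall>a\<in>A. \<forall>b\<in>B. \<sigma> a b \<in> {1..n}"
    using ctx unfolding is_context_def by (elim conjE)
  interpret C: ctxl n cj sw nw A B R \<sigma>
    by (rule ctxl.intro[OF adj rng])
  obtain b0 where b0: "b0 \<in> B" "g b0 \<noteq> bot" using g_not_bot by blast
  note D = dec[unfolded independent_decomposition_def]
  have unB: "(\<Union>l\<in>\<Lambda>. Bs l) = B"
    using D[THEN conjunct2, THEN conjunct2, THEN conjunct2, THEN conjunct2, THEN conjunct1] .
  obtain l where l: "l \<in> \<Lambda>" "b0 \<in> Bs l" using unB b0 by blast
  have sep: "separable A B R (As l) (Bs l)"
    using D[THEN conjunct2, THEN conjunct1] l by blast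
  have nzd: "no_zero_divisors (cj (\<sigma> a b))" if ab: "a \<in> A - As l" "b \<in> Bs l" for a b
  proof -
    have nz: "\<forall>(a, b) \<in> ((A - As l) \<times> Bs l) \<union> (As l \<times> (B - Bs l)). no_zero_divisors (cj (\<sigma> a b))"
      using D[THEN conjunct2, THEN conjunct2, THEN conjunct2, THEN conjunct2, THEN conjunct2] l by blast
    have "(a, b) \<in> ((A - As l) \<times> Bs l) \<union> (As l \<times> (B - Bs l))" using ab by simp
    from bspec[OF nz this] show ?thesis by simp
  qed
  let ?M = "concepts A B R \<sigma> sw nw"
  let ?c = "(g, f)"
  have empty: "Mg A B R \<sigma> sw nw (A - As l) (g, f) = {}"
  proof (rule ccontr)
    assume "Mg A B R \<sigma> sw nw (A - As l) (g, f) \<noteq> {}"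
    then obtain d where d: "d \<in> MF A B R \<sigma> sw nw (A - As l)" "concept_le B ?c d"
      unfolding Mg_def by blast
    then have mi: "meet_irreducible_in B ?M d" unfolding MF_def by blast
    obtain a x where ax: "a \<in> A - As l" "d = C.cc a x" using d unfolding MF_def by blast
    have aA: "a \<in> A" using ax by blast
    show False
    proof (cases "x = bot")
      case True
      have "phi a x = (\<lambda>_. bot)" using True by (auto simp: phi_def)
      then have "\<forall>b\<in>B. fst d b = top" using ax C.dn_bot_top by simp
      then have "is_meet_in B ?M {} d"
        using mi unfolding is_meet_in_def concept_le_def meet_irreducible_in_def by simp
      then show False using mi unfolding meet_irreducible_in_def by blast
    next
      case False
      have R0: "R a b0 = bot" using sep ax l unfolding separable_def by blast
      have "fst d b0 = C.dn (phi a x) b0" using ax by simp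
      also have "\<dots> \<le> nw (\<sigma> a b0) (R a b0) (phi a x a)"
        unfolding down_op_def using aA b0 by (auto intro: INF_lower)
      also have "\<dots> = bot" using C.nw_zero[OF aA b0(1) nzd[OF ax(1) l(2)] False] R0
        by (simp add: phi_def)
      finally have "fst d b0 = bot" by (simp add: bot_unique)
      moreover have "g b0 \<le> fst d b0" using d(2) b0 unfolding concept_le_def by auto
      ultimately show False using b0 bot_unique by auto
    qed
  qed
  have meet: "is_meet_in B ?M (Mg A B R \<sigma> sw nw (As l) (g, f)) (g, f)"
    unfolding is_meet_in_def
  proof (intro conjI ballI impI)
    show "?c \<in> ?M" by (rule gf)
    show "concept_le B ?c d" if "d \<in> Mg A B R \<sigma> sw nw (As l) (g, f)" for d
      using that unfolding Mg_def by blast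
    fix c' assume c'M: "c' \<in> ?M"
      and lb: "\<forall>d\<in>Mg A B R \<sigma> sw nw (As l) (g, f). concept_le B c' d"
    show "concept_le B c' ?c"
    proof (rule ccontr)
      assume nle: "\<not> concept_le B c' ?c"
      define T where "T = {e. \<exists>a\<in>A. \<exists>x. e = C.cc a x \<and> concept_le B ?c e \<and> \<not> concept_le B c' e}"
      have TM: "T \<subseteq> ?M" unfolding T_def using C.cc_in by blast
      have key: "\<exists>a\<in>A. \<not> concept_le B c' (C.cc a (k a))" if "(h, k) \<in> ?M" "\<not> concept_le B c' (h, k)" for h k
        using C.inf_cc[OF that(1)] that(2) by blast
      have "T \<noteq> {}"
      proof -
        obtain a where a: "a \<in> A" "\<not> concept_le B c' (C.cc a (f a))" using key[OF gf nle] by blast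
        have "concept_le B ?c (C.cc a (f a))" using C.below_cc[OF gf a(1)] .
        then show ?thesis using a unfolding T_def by blast
      qed
      then obtain d where dT: "d \<in> T" and dmax: "\<forall>y\<in>T. concept_le B d y \<longrightarrow> y = d"
        using acc_max[OF acc TM] by blast
      obtain a x where ax: "a \<in> A" "d = C.cc a x" "concept_le B ?c d" "\<not> concept_le B c' d"
        using dT unfolding T_def by blast
      have dM: "d \<in> ?M" using dT TM by blast
      have step: False if eM: "e \<in> ?M" and de: "concept_le B d e" and dne: "d \<noteq> e"
        and ne: "\<not> concept_le B c' e" for e
      proof -
        obtain h k where e: "e = (h, k)" by fastforce
        obtain a' where a': "a' \<in> A" "\<not> concept_le B c' (C.cc a' (k a'))"
          using key[of h k] eM ne e by blast
        have ey: "concept_le B e (C.cc a' (k a'))" using C.below_cc[of h k a'] eM e a' by blast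
        have "concept_le B ?c (C.cc a' (k a'))"
          using ax(3) de ey unfolding concept_le_def by (meson order_trans)
        then have yT: "C.cc a' (k a') \<in> T" using a' unfolding T_def by blast
        have "concept_le B d (C.cc a' (k a'))"
          using de ey unfolding concept_le_def by (meson order_trans)
        then have "C.cc a' (k a') = d" using dmax yT by blast
        then have "e = d" using C.antisym_c[OF eM dM] ey de by simp
        then show False using dne by simp
      qed
      have mi: "meet_irreducible_in B ?M d"
        unfolding meet_irreducible_in_def
      proof (intro conjI ballI impI)
        show "d \<in> ?M" by (rule dM)
        show "\<not> is_meet_in B ?M {} d"
          using c'M ax(4) unfolding is_meet_in_def by blast
        fix e1 e2 assume e1: "e1 \<in> ?M" and e2: "e2 \<in> ?M" and im: "is_meet_in B ?M {e1, e2} d"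
        show "d = e1 \<or> d = e2"
        proof (rule ccontr)
          assume "\<not> (d = e1 \<or> d = e2)"
          then have n1: "d \<noteq> e1" and n2: "d \<noteq> e2" by auto
          have l1: "concept_le B d e1" and l2: "concept_le B d e2"
            using im unfolding is_meet_in_def by auto
          have "concept_le B c' e1 \<and> concept_le B c' e2"
            using step[OF e1 l1 n1] step[OF e2 l2 n2] by blast
          then have "concept_le B c' d" using im c'M unfolding is_meet_in_def by blast
          then show False using ax(4) by blast
        qed
      qed
      show False
      proof (cases "a \<in> As l")
        case True
        then have "d \<in> Mg A B R \<sigma> sw nw (As l) (g, f)"
          unfolding Mg_def MF_def using mi ax by blast
        then show False using lb ax(4) by blast
      next
        case False
        then have "d \<in> Mg A B R \<sigma> sw nw (A - As l) (g, f)"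
          unfolding Mg_def MF_def using mi ax by blast
        then show False using empty by blast
      qed
    qed
  qed
  show ?thesis by (intro bexI[where x=l] conjI meet empty l(1))
qed

end
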